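(* Let $\mu$ be a singular strong limit cardinal, let $\mathbf K$ be either the class of locally finite groups or a universal class whose vocabulary has cardinality $<\mu$, and let $N\in\mathbf K$ have cardinality $\mu$. Then the set $$\mathrm{IDC}_{<\mu}(N)=\{M : M\subseteq N,\ M\in\mathbf K,\ |M|<\mu,\ M \text{ is } {\rm cf}(\mu)\text{-indecomposable}\}$$ has cardinality at most $\mu$.
   Context: A universal class $\mathbf K$ is a class of $\tau$-structures closed under isomorphism such that a $\tau$-structure belongs to $\mathbf K$ iff each of its finitely generated substructures does; $M\subseteq N$ means $M$ is a substructure of $N$. The class of locally finite groups (groups all of whose finitely generated subgroups are finite) is such a class in the group vocabulary, with substructures being subgroups. For a regular cardinal $\theta$, $M\in\mathbf K$ is $\theta$-indecomposable if whenever $\langle M_i:i<\theta\rangle$ is a $\subseteq$-increasing sequence of members of $\mathbf K$ with union $M$, then $M=M_i$ for some $i<\theta$. *)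

theory Defs
  imports Main
begin

text \<open>A vocabulary tau is given by function symbols (type 'f) with arities ar
  (constants are 0-ary function symbols) and relation symbols (type 'r) with
  arities rar.  A tau-structure with elements in type 'a is a universe together
  with interpretations; only the values on tuples from the universe matter.\<close>

record ('a, 'f, 'r) struc =
  dom :: "'a set"
  fn  :: "'f \<Rightarrow> 'a list \<Rightarrow> 'a"
  rl  :: "'r \<Rightarrow> 'a list \<Rightarrow> bool"

definition is_struc :: "('f \<Rightarrow> nat) \<Rightarrow> ('a, 'f, 'r) struc \<Rightarrow> bool" where
  "is_struc ar M \<longleftrightarrow>
     (\<forall>f xs. length xs = ar f \<and> set xs \<subseteq> dom M \<longrightarrow> fn M f xs \<in> dom M)"

definition struc_iso ::
  "('f \<Rightarrow> nat) \<Rightarrow> ('r \<Rightarrow> nat) \<Rightarrow> ('a \<Rightarrow> 'a) \<Rightarrow> ('a, 'f, 'r) struc \<Rightarrow> ('a, 'f, 'r) struc \<Rightarrow> bool" where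
  "struc_iso ar rar h M N \<longleftrightarrow>
     bij_betw h (dom M) (dom N) \<and>
     (\<forall>f xs. length xs = ar f \<and> set xs \<subseteq> dom M \<longrightarrow> h (fn M f xs) = fn N f (map h xs)) \<and>
     (\<forall>r xs. length xs = rar r \<and> set xs \<subseteq> dom M \<longrightarrow> (rl M r xs \<longleftrightarrow> rl N r (map h xs)))"

definition substruc ::
  "('f \<Rightarrow> nat) \<Rightarrow> ('r \<Rightarrow> nat) \<Rightarrow> ('a, 'f, 'r) struc \<Rightarrow> ('a, 'f, 'r) struc \<Rightarrow> bool" where
  "substruc ar rar M N \<longleftrightarrow>
     is_struc ar M \<and> is_struc ar N \<and> dom M \<subseteq> dom N \<and>
     (\<forall>f xs. length xs = ar f \<and> set xs \<subseteq> dom M \<longrightarrow> fn M f xs = fn N f xs) \<and>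
     (\<forall>r xs. length xs = rar r \<and> set xs \<subseteq> dom M \<longrightarrow> (rl M r xs \<longleftrightarrow> rl N r xs))"

inductive_set gen :: "('f \<Rightarrow> nat) \<Rightarrow> ('a, 'f, 'r) struc \<Rightarrow> 'a set \<Rightarrow> 'a set"
  for ar M X where
  gen_base: "x \<in> X \<Longrightarrow> x \<in> gen ar M X"
| gen_step: "length xs = ar f \<Longrightarrow> \<forall>x\<in>set xs. x \<in> gen ar M X \<Longrightarrow> fn M f xs \<in> gen ar M X"

definition restr :: "('a, 'f, 'r) struc \<Rightarrow> 'a set \<Rightarrow> ('a, 'f, 'r) struc" where
  "restr M A = \<lparr>dom = A, fn = fn M, rl = rl M\<rparr>"

definition universal_class ::
  "('f \<Rightarrow> nat) \<Rightarrow> ('r \<Rightarrow> nat) \<Rightarrow> (('a, 'f, 'r) struc \<Rightarrow> bool) \<Rightarrow> bool" where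
  "universal_class ar rar K \<longleftrightarrow>
     (\<forall>M. K M \<longrightarrow> is_struc ar M) \<and>
     (\<forall>M N h. K M \<and> is_struc ar N \<and> struc_iso ar rar h M N \<longrightarrow> K N) \<and>
     (\<forall>M. is_struc ar M \<longrightarrow>
        (K M \<longleftrightarrow> (\<forall>X. finite X \<and> X \<subseteq> dom M \<longrightarrow> K (restr M (gen ar M X)))))"

definition lf_group :: "('f \<Rightarrow> nat) \<Rightarrow> 'f \<Rightarrow> 'f \<Rightarrow> 'f \<Rightarrow> ('a, 'f, 'r) struc \<Rightarrow> bool" where
  "lf_group ar m iv e G \<longleftrightarrow>
     is_struc ar G \<and>
     (\<forall>x\<in>dom G. \<forall>y\<in>dom G. \<forall>z\<in>dom G.
        fn G m [fn G m [x, y], z] = fn G m [x, fn G m [y, z]]) \<and>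
     (\<forall>x\<in>dom G. fn G m [fn G e [], x] = x \<and> fn G m [x, fn G e []] = x) \<and>
     (\<forall>x\<in>dom G. fn G m [fn G iv [x], x] = fn G e [] \<and> fn G m [x, fn G iv [x]] = fn G e []) \<and>
     (\<forall>X. finite X \<and> X \<subseteq> dom G \<longrightarrow> finite (gen ar G X))"

definition group_vocab :: "('f \<Rightarrow> nat) \<Rightarrow> ('r \<Rightarrow> nat) \<Rightarrow> 'f \<Rightarrow> 'f \<Rightarrow> 'f \<Rightarrow> bool" where
  "group_vocab ar rar m iv e \<longleftrightarrow>
     (UNIV :: 'f set) = {m, iv, e} \<and> m \<noteq> iv \<and> m \<noteq> e \<and> iv \<noteq> e \<and>
     ar m = 2 \<and> ar iv = 1 \<and> ar e = 0 \<and> (UNIV :: 'r set) = {}"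

text \<open>th is a regular cardinal, represented as a cardinal well-order (initial
  ordinal); sequences <M_i : i < theta> are indexed by Field th.  The union of the
  increasing chain equals M iff the universe of M is the union of the universes
  and every M_i is a substructure of M.\<close>
definition indecomposable ::
  "('f \<Rightarrow> nat) \<Rightarrow> ('r \<Rightarrow> nat) \<Rightarrow> (('a, 'f, 'r) struc \<Rightarrow> bool) \<Rightarrow> 'i rel \<Rightarrow> ('a, 'f, 'r) struc \<Rightarrow> bool" where
  "indecomposable ar rar K th M \<longleftrightarrow>
     (\<forall>Ms :: 'i \<Rightarrow> ('a, 'f, 'r) struc.
        (\<forall>i\<in>Field th. K (Ms i)) \<and>
        (\<forall>i j. (i, j) \<in> th \<longrightarrow> substruc ar rar (Ms i) (Ms j)) \<and>
        dom M = (\<Union>i\<in>Field th. dom (Ms i)) \<and>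
        (\<forall>i\<in>Field th. substruc ar rar (Ms i) M)
      \<longrightarrow> (\<exists>i\<in>Field th. dom (Ms i) = dom M))"

definition is_cofinality :: "'i rel \<Rightarrow> 'a set \<Rightarrow> bool" where
  "is_cofinality th A \<longleftrightarrow> Card_order th \<and>
     (\<exists>C. C \<subseteq> Field (card_of A) \<and> cofinal C (card_of A) \<and>
          ordIso2 (card_of (Field th)) (card_of C) \<and>
          (\<forall>C'. C' \<subseteq> Field (card_of A) \<and> cofinal C' (card_of A) \<longrightarrow>
                 ordLeq3 (card_of C) (card_of C')))"

definition strong_limit :: "'a set \<Rightarrow> bool" where
  "strong_limit A \<longleftrightarrow> infinite A \<and>
     (\<forall>X. X \<subseteq> A \<and> ordLess2 (card_of X) (card_of A) \<longrightarrow> ordLess2 (card_of (Pow X)) (card_of A))"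

definition singular :: "'i rel \<Rightarrow> 'a set \<Rightarrow> bool" where
  "singular th A \<longleftrightarrow> infinite A \<and> is_cofinality th A \<and> ordLess2 (card_of (Field th)) (card_of A)"

end

theory Submission
  imports Defs
begin
unbundle cardinal_syntax

lemma fin_le_inf: "finite X \<Longrightarrow> infinite B \<Longrightarrow> |X| \<le>o |B|"
  using finite_ordLess_infinite[OF card_of_Well_order card_of_Well_order, of X B]
  by (simp add: Field_card_of ordLess_imp_ordLeq)

lemma Un_le_inf: "infinite B \<Longrightarrow> |X| \<le>o |B| \<Longrightarrow> |Y| \<le>o |B| \<Longrightarrow> |X \<union> Y| \<le>o |B|"
  using card_of_Un_ordLeq_infinite_Field[of "|B|" X Y] by (simp add: Field_card_of card_of_Card_order card_of_card_order_on)

lemma Times_le_inf: "infinite B \<Longrightarrow> |X| \<le>o |B| \<Longrightarrow> |Y| \<le>o |B| \<Longrightarrow> |X \<times> Y| \<le>o |B|"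
  using card_of_Times_ordLeq_infinite_Field[of "|B|" X Y] by (simp add: Field_card_of card_of_Card_order card_of_card_order_on)

lemma lists_le_inf:
  assumes inf: "infinite B" and G: "|G| \<le>o |B|"
  shows "|lists G| \<le>o |B|"
proof -
  define L where "L n = {xs. length xs = n \<and> set xs \<subseteq> G}" for n
  have Ln: "|L n| \<le>o |B|" for n
  proof (induction n)
    case 0
    have "L 0 = {[]}" by (auto simp: L_def)
    then show ?case using fin_le_inf[OF _ inf, of "{[]}"] by simp
  next
    case (Suc n)
    have "L (Suc n) \<subseteq> (\<lambda>(x,xs). x # xs) ` (G \<times> L n)"
    proof
      fix ys assume "ys \<in> L (Suc n)"
      then obtain x xs where "ys = x # xs" "x \<in> G" "xs \<in> L n"
        by (cases ys) (auto simp: L_def)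
      then show "ys \<in> (\<lambda>(x,xs). x # xs) ` (G \<times> L n)" by force
    qed
    then have "|L (Suc n)| \<le>o |(\<lambda>(x,xs). x # xs) ` (G \<times> L n)|" by (rule card_of_mono1)
    also have "|(\<lambda>(x,xs). x # xs) ` (G \<times> L n)| \<le>o |G \<times> L n|" by (rule card_of_image)
    also have "|G \<times> L n| \<le>o |B|" using Times_le_inf[OF inf G Suc] .
    finally show ?case .
  qed
  have "lists G = (\<Union>n. L n)" by (auto simp: L_def)
  moreover have "|\<Union>n. L n| \<le>o |B|"
    using card_of_UNION_ordLeq_infinite[OF inf, of UNIV L] Ln inf infinite_iff_card_of_nat by blast
  ultimately show ?thesis by simp
qed

lemma gen_mono: assumes "X \<subseteq> Y" shows "gen ar N X \<subseteq> gen ar N Y"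
proof
  fix x assume "x \<in> gen ar N X"
  then show "x \<in> gen ar N Y"
    using assms by (induction x rule: gen.induct) (auto intro: gen.intros)
qed

lemma gen_sub: assumes "is_struc ar N" "X \<subseteq> dom N" shows "gen ar N X \<subseteq> dom N"
proof
  fix x assume "x \<in> gen ar N X"
  then show "x \<in> dom N"
    using assms by (induction x rule: gen.induct) (auto simp: is_struc_def subset_iff)
qed

lemma gen_restr: "gen ar (restr M S) X = gen ar M X"
proof
  show "gen ar (restr M S) X \<subseteq> gen ar M X"
  proof
    fix x assume "x \<in> gen ar (restr M S) X"
    then show "x \<in> gen ar M X"
      by (induction x rule: gen.induct) (auto simp: restr_def intro: gen.intros)
  qed
  show "gen ar M X \<subseteq> gen ar (restr M S) X"
  proof
    fix x assume "x \<in> gen ar M X"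
    then show "x \<in> gen ar (restr M S) X"
    proof (induction x rule: gen.induct)
      case (gen_base x) then show ?case by (rule gen.gen_base)
    next
      case (gen_step xs f)
      then have "fn (restr M S) f xs \<in> gen ar (restr M S) X" by (auto intro: gen.gen_step)
      then show ?case by (simp add: restr_def)
    qed
  qed
qed

lemma gen_card:
  assumes inf: "infinite B" and X: "|X| \<le>o |B|" and F: "|UNIV :: 'f set| \<le>o |B|"
  shows "|gen (ar :: 'f \<Rightarrow> nat) N X| \<le>o |B|"
proof -
  define St where "St = rec_nat X (\<lambda>n S. S \<union> (\<lambda>(f,xs). fn N f xs) ` (UNIV \<times> lists S))"
  have St0: "St 0 = X" and StS: "St (Suc n) = St n \<union> (\<lambda>(f,xs). fn N f xs) ` (UNIV \<times> lists (St n))" for n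
    by (simp_all add: St_def)
  have Stc: "|St n| \<le>o |B|" for n
  proof (induction n)
    case 0 then show ?case using X St0 by simp
  next
    case (Suc n)
    have "|(\<lambda>(f,xs). fn N f xs) ` (UNIV \<times> lists (St n))| \<le>o |(UNIV :: 'f set) \<times> lists (St n)|"
      by (rule card_of_image)
    also have "|(UNIV :: 'f set) \<times> lists (St n)| \<le>o |B|"
      using Times_le_inf[OF inf F lists_le_inf[OF inf Suc]] .
    finally show ?case unfolding StS using Un_le_inf[OF inf Suc] by blast
  qed
  have mono: "m \<le> n \<Longrightarrow> St m \<subseteq> St n" for m n
    by (rule lift_Suc_mono_le[of St]) (auto simp: StS)
  have lst: "set xs \<subseteq> (\<Union>n. St n) \<Longrightarrow> \<exists>n. set xs \<subseteq> St n" for xs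
  proof (induction xs)
    case Nil then show ?case by simp
  next
    case (Cons x xs)
    then obtain a b where "x \<in> St a" "set xs \<subseteq> St b" by auto
    then have "x \<in> St (max a b)" "set xs \<subseteq> St (max a b)" using mono[of a "max a b"] mono[of b "max a b"] by auto
    then show ?case by auto
  qed
  have "gen ar N X \<subseteq> (\<Union>n. St n)"
  proof
    fix x assume "x \<in> gen ar N X"
    then show "x \<in> (\<Union>n. St n)"
    proof (induction x rule: gen.induct)
      case (gen_base x) then show ?case using St0 by auto
    next
      case (gen_step xs f)
      then obtain n where "set xs \<subseteq> St n" using lst by blast
      then have "fn N f xs \<in> St (Suc n)" unfolding StS by force
      then show ?case by blast
    qed
  qed
  moreover have "|\<Union>n. St n| \<le>o |B|"
    using card_of_UNION_ordLeq_infinite[OF inf, of UNIV St] Stc inf infinite_iff_card_of_nat by blast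
  ultimately show ?thesis using card_of_mono1 ordLeq_transitive by blast
qed


lemma restr_simps[simp]: "dom (restr M S) = S" "fn (restr M S) = fn M" "rl (restr M S) = rl M"
  "restr (restr M S) T = restr M T"
  by (simp_all add: restr_def)

lemma K_restr:
  assumes K: "(\<exists>m iv e. group_vocab ar rar m iv e \<and> K = lf_group ar m iv e)
            \<or> (universal_class ar rar K \<and>
               ordLess2 (card_of ((UNIV :: 'f set) <+> (UNIV :: 'r set))) (card_of (dom N)))"
    and KM: "K (M :: ('a,'f,'r) struc)" and S: "S \<subseteq> dom M"
    and cl: "\<forall>f xs. length xs = ar f \<and> set xs \<subseteq> S \<longrightarrow> fn M f xs \<in> S"
  shows "K (restr M S)"
proof -
  have st: "is_struc ar (restr M S)" using cl by (simp add: is_struc_def)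
  from K show ?thesis
  proof
    assume "\<exists>m iv e. group_vocab ar rar m iv e \<and> K = lf_group ar m iv e"
    then obtain m iv e where Kd: "K = lf_group ar m iv e" by blast
    show ?thesis using KM S st unfolding Kd lf_group_def gen_restr
      by (simp add: subset_iff) 
  next
    assume u: "universal_class ar rar K \<and> card_of ((UNIV :: 'f set) <+> (UNIV :: 'r set)) <o card_of (dom N)"
    then have u1: "\<forall>M. K M \<longrightarrow> is_struc ar M"
      and u3: "\<forall>M. is_struc ar M \<longrightarrow>
        (K M \<longleftrightarrow> (\<forall>X. finite X \<and> X \<subseteq> dom M \<longrightarrow> K (restr M (gen ar M X))))"
      unfolding universal_class_def by blast+
    have "\<forall>X. finite X \<and> X \<subseteq> dom M \<longrightarrow> K (restr M (gen ar M X))"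
      using u3 u1 KM by blast
    then have "\<forall>X. finite X \<and> X \<subseteq> S \<longrightarrow> K (restr (restr M S) (gen ar (restr M S) X))"
      using S by (auto simp: gen_restr)
    then show ?thesis using u3 st by auto
  qed
qed

lemma finite_max:
  assumes "finite C" "C \<noteq> {}" "C \<subseteq> Field r" "Total r" "Refl r" "trans r"
  shows "\<exists>m\<in>C. \<forall>c\<in>C. (c,m) \<in> r"
  using assms
proof (induction C rule: finite_ne_induct)
  case (singleton x) then show ?case by (auto simp: refl_on_def)
next
  case (insert x F)
  then obtain m where m: "m \<in> F" "\<forall>c\<in>F. (c,m) \<in> r" by auto
  show ?case
  proof (cases "(m,x) \<in> r")
    case True then show ?thesis using m insert.prems by (auto simp: refl_on_def dest: transD)
  next
    case False
    have mf: "m \<in> Field r" "x \<in> Field r" using insert.prems m by auto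
    then have "x \<noteq> m" using False insert.prems by (auto simp: refl_on_def)
    then have "(x,m) \<in> r" using insert.prems mf False unfolding total_on_def by blast
    then show ?thesis using m by auto
  qed
qed


theorem claim1p6:
  fixes ar :: "'f \<Rightarrow> nat" and rar :: "'r \<Rightarrow> nat"
    and K :: "('a, 'f, 'r) struc \<Rightarrow> bool"
    and N :: "('a, 'f, 'r) struc" and th :: "'i rel"
  assumes sing: "singular th (dom N)"
    and slim: "strong_limit (dom N)"
    and K: "(\<exists>m iv e. group_vocab ar rar m iv e \<and> K = lf_group ar m iv e)
            \<or> (universal_class ar rar K \<and>
               ordLess2 (card_of ((UNIV :: 'f set) <+> (UNIV :: 'r set))) (card_of (dom N)))"
    and N: "K N"
  shows "ordLeq3
           (card_of (dom ` {M. substruc ar rar M N \<and> K M \<and>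
                               ordLess2 (card_of (dom M)) (card_of (dom N)) \<and>
                               indecomposable ar rar K th M}))
           (card_of (dom N))"
proof -
  define A where "A = dom N"
  define r where "r = |A|"
  have Ainf: "infinite A" using sing unfolding A_def singular_def by blast
  have thC: "Card_order th" and kless: "|Field th| <o |A|"
    using sing unfolding A_def singular_def is_cofinality_def by blast+
  obtain C where CA: "C \<subseteq> A" and Ccof: "cofinal C r" and thCi: "|Field th| =o |C|"
    and Cmin: "\<forall>C'. C' \<subseteq> A \<and> cofinal C' r \<longrightarrow> |C| \<le>o |C'|"
    using sing unfolding A_def r_def singular_def is_cofinality_def Field_card_of by blast
  have Fr: "Field r = A" unfolding r_def by (rule Field_card_of)
  have rC: "Card_order r" unfolding r_def by (rule card_of_Card_order)
  have wo: "Well_order r" unfolding r_def by (rule card_of_Well_order)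
  then have rrefl: "Refl r" and rtrans: "trans r" and ranti: "antisym r" and rtot: "Total r"
    unfolding well_order_on_def linear_order_on_def partial_order_on_def preorder_on_def by blast+
  have thwo: "Well_order th" using thC unfolding card_order_on_def by blast
  then have threfl: "Refl th" and thtrans: "trans th"
    unfolding well_order_on_def linear_order_on_def partial_order_on_def preorder_on_def by blast+
  obtain g where g: "bij_betw g (Field th) C" using thCi card_of_ordIso by blast
  have Nst: "is_struc ar N" using K N unfolding lf_group_def universal_class_def by blast
  have Cinf: "infinite C"
  proof
    assume fC: "finite C"
    obtain a0 where "a0 \<in> A" using Ainf by (metis finite.emptyI ex_in_conv)
    then obtain b where "b \<in> C" using Ccof Fr unfolding cofinal_def by blast
    then obtain m where m: "m \<in> C" "\<forall>c\<in>C. (c,m) \<in> r"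
      using finite_max[OF fC _ _ rtot rrefl rtrans] CA Fr by blast
    then obtain b' where "b' \<in> C" "m \<noteq> b'" "(m,b') \<in> r" using Ccof CA Fr unfolding cofinal_def by blast
    then show False using m ranti unfolding antisym_def by blast
  qed
  then have "infinite (Field th)" using g bij_betw_finite by blast
  then have natless: "|UNIV :: nat set| <o |A|"
    using infinite_iff_card_of_nat kless ordLeq_ordLess_trans by blast
  have fless: "|UNIV :: 'f set| <o |A|"
    using K
  proof
    assume "\<exists>m iv e. group_vocab ar rar m iv e \<and> K = lf_group ar m iv e"
    then obtain m iv e where "(UNIV :: 'f set) = {m, iv, e}" unfolding group_vocab_def by blast
    then have "finite (UNIV :: 'f set)" by (metis finite.emptyI finite.insertI)
    then show ?thesis using finite_ordLess_infinite[OF card_of_Well_order card_of_Well_order, of "UNIV :: 'f set" A]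
      Ainf by (simp add: Field_card_of)
  next
    assume "universal_class ar rar K \<and> |(UNIV :: 'f set) <+> (UNIV :: 'r set)| <o |dom N|"
    then show ?thesis using card_of_Plus1 ordLeq_ordLess_trans unfolding A_def by blast
  qed
  define T where "T i = (\<Union>j\<in>under th i. underS r (g j))" for i
  define Nn where "Nn i = gen ar N (T i)" for i
  have Tbound: "\<exists>a\<in>A. T i \<subseteq> underS r a" if i: "i \<in> Field th" for i
  proof -
    define D where "D = g ` underS th i"
    have "|D| \<le>o |underS th i|" unfolding D_def by (rule card_of_image)
    also have "|underS th i| <o th" using card_of_underS[OF thC i] .
    also have "th =o |Field th|" using card_of_Field_ordIso[OF thC] ordIso_symmetric by blast
    also have "|Field th| =o |C|" by (rule thCi)
    finally have DC: "|D| <o |C|" .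
    have uF: "underS th i \<subseteq> Field th" by (auto simp: underS_def Field_def)
    have DA: "D \<subseteq> A" unfolding D_def using g CA uF bij_betw_imp_surj_on by blast
    have "\<not> cofinal D r"
    proof
      assume "cofinal D r"
      then have "|C| \<le>o |D|" using Cmin DA by blast
      then show False using DC not_ordLess_ordLeq by blast
    qed
    then obtain a0 where a0: "a0 \<in> A" "\<forall>b\<in>D. a0 = b \<or> (a0,b) \<notin> r"
      unfolding cofinal_def Fr by blast
    have giA: "g i \<in> A" using g i CA bij_betw_imp_surj_on by blast
    define a where "a = (if (a0, g i) \<in> r then g i else a0)"
    have aA: "a \<in> A" using a0 giA a_def by auto
    have a0a: "(a0, a) \<in> r" and gia: "(g i, a) \<in> r"
    proof -
      show "(a0, a) \<in> r" using a0 giA rrefl Fr unfolding a_def refl_on_def by auto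
      show "(g i, a) \<in> r"
      proof (cases "(a0, g i) \<in> r")
        case True then show ?thesis using giA rrefl Fr unfolding a_def refl_on_def by auto
      next
        case False
        then have "a0 \<noteq> g i" using giA rrefl Fr unfolding refl_on_def by auto
        then show ?thesis using False a0 giA rtot Fr unfolding a_def total_on_def by auto
      qed
    qed
    have ja: "(g j, a) \<in> r" if j: "j \<in> under th i" for j
    proof (cases "j = i")
      case True then show ?thesis using gia by simp
    next
      case False
      then have "g j \<in> D" using j unfolding D_def under_def underS_def by auto
      then have gjA: "g j \<in> A" using DA by blast
      have "a0 = g j \<or> (a0, g j) \<notin> r" using a0 \<open>g j \<in> D\<close> by blast
      moreover have "g j \<in> Field r" "a0 \<in> Field r" using Fr gjA a0(1) by auto
      ultimately have "(g j, a0) \<in> r"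
        using rtot rrefl unfolding total_on_def refl_on_def by metis
      then show ?thesis using a0a rtrans unfolding trans_def by blast
    qed
    have "T i \<subseteq> underS r a"
    proof
      fix x assume "x \<in> T i"
      then obtain j where j: "j \<in> under th i" "x \<in> underS r (g j)" unfolding T_def by blast
      then have xg: "x \<noteq> g j" "(x, g j) \<in> r" unfolding underS_def by auto
      have gja: "(g j, a) \<in> r" using ja j by blast
      then have "(x, a) \<in> r" using xg rtrans unfolding trans_def by blast
      moreover have "x \<noteq> a" using xg gja ranti unfolding antisym_def by blast
      ultimately show "x \<in> underS r a" unfolding underS_def by blast
    qed
    then show ?thesis using aA by blast
  qed
  have TA: "T i \<subseteq> A" if "i \<in> Field th" for i
    using Tbound[OF that] Fr by (auto simp: underS_def Field_def)
  have Tless: "|T i| <o |A|" if i: "i \<in> Field th" for i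
  proof -
    obtain a where a: "a \<in> A" "T i \<subseteq> underS r a" using Tbound[OF i] by blast
    have "|T i| \<le>o |underS r a|" using a card_of_mono1 by blast
    also have "|underS r a| <o r" using card_of_underS[OF rC] a Fr by blast
    finally show ?thesis unfolding r_def .
  qed
  have NnA: "Nn i \<subseteq> A" if "i \<in> Field th" for i
    unfolding Nn_def A_def using gen_sub[OF Nst] TA[OF that] A_def by blast
  have Nnless: "|Nn i| <o |A|" if i: "i \<in> Field th" for i
  proof -
    define B where "B = T i <+> ((UNIV :: 'f set) <+> (UNIV :: nat set))"
    have Binf: "infinite B" unfolding B_def by simp
    have B1: "|T i| \<le>o |B|" unfolding B_def by (rule card_of_Plus1)
    have B2: "|UNIV :: 'f set| \<le>o |B|" unfolding B_def
      using card_of_Plus1 card_of_Plus2 ordLeq_transitive by blast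
    have "|B| <o |A|" unfolding B_def
      using card_of_Plus_ordLess_infinite[OF Ainf Tless[OF i] card_of_Plus_ordLess_infinite[OF Ainf fless natless]] .
    then show ?thesis unfolding Nn_def by (rule ordLeq_ordLess_trans[OF gen_card[OF Binf B1 B2]])
  qed
  have Nncl: "fn N f xs \<in> Nn i" if "length xs = ar f" "set xs \<subseteq> Nn i" for f xs i
    unfolding Nn_def using that by (intro gen.gen_step) (auto simp: Nn_def)
  have Nnmono: "Nn i \<subseteq> Nn j" if "(i,j) \<in> th" for i j
  proof -
    have "under th i \<subseteq> under th j" using that thtrans unfolding under_def trans_def by blast
    then have "T i \<subseteq> T j" unfolding T_def by blast
    then show ?thesis unfolding Nn_def by (rule gen_mono)
  qed
  have cover: "A \<subseteq> (\<Union>i\<in>Field th. Nn i)"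
  proof
    fix x assume "x \<in> A"
    then obtain b where b: "b \<in> C" "x \<noteq> b" "(x,b) \<in> r" using Ccof Fr unfolding cofinal_def by blast
    then obtain j where j: "j \<in> Field th" "g j = b" using g unfolding bij_betw_def by blast
    have "j \<in> under th j" using j threfl unfolding under_def refl_on_def by blast
    then have "x \<in> T j" unfolding T_def using b j unfolding underS_def by blast
    then have "x \<in> Nn j" unfolding Nn_def by (rule gen.gen_base)
    then show "x \<in> (\<Union>i\<in>Field th. Nn i)" using j by blast
  qed
  let ?S = "{M. substruc ar rar M N \<and> K M \<and> |dom M| <o |dom N| \<and> indecomposable ar rar K th M}"
  have sub: "dom ` ?S \<subseteq> (\<Union>i\<in>Field th. Pow (Nn i))"
  proof
    fix X assume "X \<in> dom ` ?S"
    then obtain M where M: "substruc ar rar M N" "K M" "indecomposable ar rar K th M" and X: "X = dom M"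
      by blast
    have Mst: "is_struc ar M" and MN: "dom M \<subseteq> A"
      and Mfn: "\<forall>f xs. length xs = ar f \<and> set xs \<subseteq> dom M \<longrightarrow> fn M f xs = fn N f xs"
      using M(1) unfolding substruc_def A_def by blast+
    define Ms where "Ms i = restr M (dom M \<inter> Nn i)" for i
    have cl: "\<forall>f xs. length xs = ar f \<and> set xs \<subseteq> dom M \<inter> Nn i \<longrightarrow> fn M f xs \<in> dom M \<inter> Nn i" for i
    proof (intro allI impI)
      fix f xs assume a: "length xs = ar f \<and> set xs \<subseteq> dom M \<inter> Nn i"
      then have "fn M f xs = fn N f xs" using Mfn by blast
      moreover have "fn M f xs \<in> dom M" using Mst a unfolding is_struc_def by blast
      moreover have "fn N f xs \<in> Nn i" using Nncl a by blast
      ultimately show "fn M f xs \<in> dom M \<inter> Nn i" by simp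
    qed
    have st: "is_struc ar (Ms i)" for i using cl[of i] unfolding Ms_def is_struc_def by simp
    have c1: "\<forall>i\<in>Field th. K (Ms i)" unfolding Ms_def using K_restr[OF K M(2) _ cl] by blast
    have c2: "\<forall>i j. (i, j) \<in> th \<longrightarrow> substruc ar rar (Ms i) (Ms j)"
      using st Nnmono unfolding substruc_def by (auto simp: Ms_def)
    have c3: "dom M = (\<Union>i\<in>Field th. dom (Ms i))" using MN cover by (auto simp: Ms_def)
    have c4: "\<forall>i\<in>Field th. substruc ar rar (Ms i) M"
      using st Mst unfolding substruc_def by (auto simp: Ms_def)
    obtain i where i: "i \<in> Field th" "dom (Ms i) = dom M"
      using M(3) c1 c2 c3 c4 unfolding indecomposable_def by blast
    then have "dom M \<subseteq> Nn i" by (auto simp: Ms_def)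
    then show "X \<in> (\<Union>i\<in>Field th. Pow (Nn i))" using i X by blast
  qed
  have "|\<Union>i\<in>Field th. Pow (Nn i)| \<le>o |A|"
  proof (rule card_of_UNION_ordLeq_infinite[OF Ainf])
    show "|Field th| \<le>o |A|" using kless ordLess_imp_ordLeq by blast
    show "\<forall>i\<in>Field th. |Pow (Nn i)| \<le>o |A|"
    proof
      fix i assume i: "i \<in> Field th"
      have "|Pow (Nn i)| <o |A|" using slim NnA[OF i] Nnless[OF i] unfolding strong_limit_def A_def by blast
      then show "|Pow (Nn i)| \<le>o |A|" by (rule ordLess_imp_ordLeq)
    qed
  qed
  then show ?thesis using ordLeq_transitive[OF card_of_mono1[OF sub]] unfolding A_def by blast
qed

end
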